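(* Let $P=\{p_1,\dots,p_n\}$ be weighted points in $\mathbb{R}^2$ with total weight $1$, let $S=\{s_1,\dots,s_m\}$ be triangles in $\mathbb{R}^2$ of total area $1$ with longest edge length $\Delta$, and let $0<\delta\le\frac{1}{2\pi}$. Let $\tau$ be the transport plan produced by the construction described in the context and $\tau^*$ an optimal transport plan between $P$ and $S$. Then $\|\tau\|\le(1+9\delta)\|\tau^*\|$.
   Context: Each triangle's mass equals its area and is spread uniformly over it (all triangles have density one; overlapping triangles add densities). A transport plan from $P$ to $S$ moves from each $p$ its weight $\|p\|$ and delivers to the triangles exactly their mass distribution; its cost $\|\tau\|$ is the integral of (mass moved) times Euclidean distance; $\|\tau^*\|$ is the minimum cost (earth mover's distance). Construction: (1) Overlay a uniform grid of $\Delta\times\Delta$ square cells and keep the cells intersecting some triangle. (2) Recursively process each cell: if there is a point of $P$ such that the whole cell lies within Euclidean distance $\delta/\sqrt{nm}$ of it, stop; otherwise, if for some point of $P$ the ratio of the distances to the furthest and the closest point of the cell exceeds $1+\delta$, split the cell into four equal squares and recurse; otherwise stop. Let $Q$ be the resulting cells, each recording the total area of triangles within it. (3) In each cell $q\in Q$ pick an arbitrary point with weight equal to the total area of triangles contained in $q$; call this weighted set $T$. (4) Compute an optimal transport plan $\nu$ between $P$ and $T$. (5) Obtain $\tau$ by spreading the mass sent by $\nu$ to each $t\in T$ uniformly over the parts of the triangles lying in the cell from which $t$ was chosen. *)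

theory Defs
  imports "HOL-Analysis.Analysis"
begin

type_synonym pt = "real \<times> real"

text \<open>A cell is encoded by its lower-left corner and its side length.
  The cell itself is the half-open square (cells of one level partition the plane);
  its closure is the closed square.\<close>

definition sq :: "pt \<Rightarrow> real \<Rightarrow> pt set" where
  "sq a l = {fst a ..< fst a + l} \<times> {snd a ..< snd a + l}"

definition csq :: "pt \<Rightarrow> real \<Rightarrow> pt set" where
  "csq a l = {fst a .. fst a + l} \<times> {snd a .. snd a + l}"

definition tri :: "pt \<Rightarrow> pt \<Rightarrow> pt \<Rightarrow> pt set" where
  "tri u v w = convex hull {u, v, w}"

definition tri_dens :: "nat \<Rightarrow> (nat \<Rightarrow> pt) \<Rightarrow> (nat \<Rightarrow> pt) \<Rightarrow> (nat \<Rightarrow> pt) \<Rightarrow> pt \<Rightarrow> real" where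
  "tri_dens m a b c x = (\<Sum>j<m. indicator (tri (a j) (b j) (c j)) x)"

definition tri_union :: "nat \<Rightarrow> (nat \<Rightarrow> pt) \<Rightarrow> (nat \<Rightarrow> pt) \<Rightarrow> (nat \<Rightarrow> pt) \<Rightarrow> pt set" where
  "tri_union m a b c = (\<Union>j<m. tri (a j) (b j) (c j))"

definition cell_mass :: "nat \<Rightarrow> (nat \<Rightarrow> pt) \<Rightarrow> (nat \<Rightarrow> pt) \<Rightarrow> (nat \<Rightarrow> pt) \<Rightarrow> pt \<times> real \<Rightarrow> real" where
  "cell_mass m a b c q = (\<Sum>j<m. measure lborel (tri (a j) (b j) (c j) \<inter> sq (fst q) (snd q)))"

definition longest_edge :: "nat \<Rightarrow> (nat \<Rightarrow> pt) \<Rightarrow> (nat \<Rightarrow> pt) \<Rightarrow> (nat \<Rightarrow> pt) \<Rightarrow> real" where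
  "longest_edge m a b c =
     Max (\<Union>j<m. {dist (a j) (b j), dist (b j) (c j), dist (c j) (a j)})"

text \<open>Stopping / splitting rule of the recursion.
  The ratio furthest/closest exceeds 1+delta is written multiplicatively
  (closest distance 0 means infinite ratio).\<close>
definition near_cell :: "pt \<Rightarrow> real \<Rightarrow> pt set \<Rightarrow> bool" where
  "near_cell p r C \<longleftrightarrow> (\<forall>x\<in>C. dist p x \<le> r)"

definition ratio_exceeds :: "pt \<Rightarrow> real \<Rightarrow> pt set \<Rightarrow> bool" where
  "ratio_exceeds p \<delta> C \<longleftrightarrow> (SUP x\<in>C. dist p x) > (1 + \<delta>) * (INF x\<in>C. dist p x)"

definition splits :: "nat \<Rightarrow> nat \<Rightarrow> (nat \<Rightarrow> pt) \<Rightarrow> real \<Rightarrow> pt set \<Rightarrow> bool" where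
  "splits n m p \<delta> C \<longleftrightarrow>
     \<not> (\<exists>i<n. near_cell (p i) (\<delta> / sqrt (real n * real m)) C)
     \<and> (\<exists>i<n. ratio_exceeds (p i) \<delta> C)"

text \<open>All cells produced by the recursive subdivision (internal nodes and leaves).
  The grid has side Delta and is anchored at the point org.\<close>
inductive_set qtree :: "nat \<Rightarrow> nat \<Rightarrow> (nat \<Rightarrow> pt) \<Rightarrow> real \<Rightarrow> pt set \<Rightarrow> real \<Rightarrow> pt
                        \<Rightarrow> (pt \<times> real) set"
  for n m p \<delta> U \<Delta> org where
  grid: "sq (fst org + real_of_int i * \<Delta>, snd org + real_of_int j * \<Delta>) \<Delta> \<inter> U \<noteq> {}
         \<Longrightarrow> ((fst org + real_of_int i * \<Delta>, snd org + real_of_int j * \<Delta>), \<Delta>)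
               \<in> qtree n m p \<delta> U \<Delta> org"
| child: "(a, l) \<in> qtree n m p \<delta> U \<Delta> org \<Longrightarrow> splits n m p \<delta> (sq a l)
         \<Longrightarrow> k \<in> {0, 1} \<Longrightarrow> k' \<in> {0, 1}
         \<Longrightarrow> ((fst a + k * (l / 2), snd a + k' * (l / 2)), l / 2) \<in> qtree n m p \<delta> U \<Delta> org"

definition leaf_cells where
  "leaf_cells n m p \<delta> U \<Delta> org =
     {q \<in> qtree n m p \<delta> U \<Delta> org. \<not> splits n m p \<delta> (sq (fst q) (snd q))}"

text \<open>Transport plans from the weighted points p_i (weights w_i) to the mass
  distribution with density dens, given by densities f_i of the mass sent from p_i.\<close>
definition is_plan :: "nat \<Rightarrow> (nat \<Rightarrow> real) \<Rightarrow> (pt \<Rightarrow> real) \<Rightarrow> (nat \<Rightarrow> pt \<Rightarrow> real) \<Rightarrow> bool" where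
  "is_plan n w dens f \<longleftrightarrow>
     (\<forall>i<n. (\<forall>x. 0 \<le> f i x) \<and> integrable lborel (f i) \<and> integral\<^sup>L lborel (f i) = w i)
     \<and> (AE x in lborel. (\<Sum>i<n. f i x) = dens x)"

definition plan_cost :: "nat \<Rightarrow> (nat \<Rightarrow> pt) \<Rightarrow> (nat \<Rightarrow> pt \<Rightarrow> real) \<Rightarrow> real" where
  "plan_cost n p f = (\<Sum>i<n. integral\<^sup>L lborel (\<lambda>x. f i x * dist x (p i)))"

definition is_disc_plan :: "nat \<Rightarrow> (nat \<Rightarrow> real) \<Rightarrow> 'q set \<Rightarrow> ('q \<Rightarrow> real) \<Rightarrow> (nat \<Rightarrow> 'q \<Rightarrow> real) \<Rightarrow> bool" where
  "is_disc_plan n w Q wt \<nu> \<longleftrightarrow>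
     (\<forall>i<n. \<forall>q\<in>Q. 0 \<le> \<nu> i q) \<and> (\<forall>i<n. (\<Sum>q\<in>Q. \<nu> i q) = w i) \<and> (\<forall>q\<in>Q. (\<Sum>i<n. \<nu> i q) = wt q)"

definition disc_cost :: "nat \<Rightarrow> (nat \<Rightarrow> pt) \<Rightarrow> 'q set \<Rightarrow> ('q \<Rightarrow> pt) \<Rightarrow> (nat \<Rightarrow> 'q \<Rightarrow> real) \<Rightarrow> real" where
  "disc_cost n p Q t \<nu> = (\<Sum>i<n. \<Sum>q\<in>Q. \<nu> i q * dist (p i) (t q))"

definition spread_plan :: "nat \<Rightarrow> (nat \<Rightarrow> pt) \<Rightarrow> (nat \<Rightarrow> pt) \<Rightarrow> (nat \<Rightarrow> pt) \<Rightarrow> (pt \<times> real) set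
                           \<Rightarrow> (nat \<Rightarrow> pt \<times> real \<Rightarrow> real) \<Rightarrow> nat \<Rightarrow> pt \<Rightarrow> real" where
  "spread_plan m a b c Q \<nu> i x =
     (\<Sum>q\<in>Q. \<nu> i q / cell_mass m a b c q * indicator (sq (fst q) (snd q)) x) * tri_dens m a b c x"

end

theory Submission
  imports Defs
begin

lemma dy1:
  fixes o' \<Delta> y :: real and i i' :: int and k k' :: nat
  assumes D: "\<Delta> > 0" and kk: "k \<le> k'"
    and y1: "o' + of_int i * (\<Delta>/2^k) \<le> y" "y < o' + of_int i * (\<Delta>/2^k) + \<Delta>/2^k"
    and y2: "o' + of_int i' * (\<Delta>/2^k') \<le> y" "y < o' + of_int i' * (\<Delta>/2^k') + \<Delta>/2^k'"
  shows "o' + of_int i * (\<Delta>/2^k) \<le> o' + of_int i' * (\<Delta>/2^k')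
       \<and> o' + of_int i' * (\<Delta>/2^k') + \<Delta>/2^k' \<le> o' + of_int i * (\<Delta>/2^k) + \<Delta>/2^k"
proof -
  define h where "h = \<Delta>/2^k'"
  define d :: int where "d = 2^(k'-k)"
  have h0: "h > 0" using D by (simp add: h_def)
  have hk: "\<Delta>/2^k = of_int d * h"
  proof -
    have "(2::real)^k' = 2^k * 2^(k'-k)" using kk by (simp flip: power_add)
    then show ?thesis using D by (simp add: h_def d_def)
  qed
  have Y1: "o' + of_int i * (of_int d * h) \<le> y" "y < o' + of_int i * (of_int d * h) + of_int d * h"
    using y1 hk by simp_all
  have Y2: "o' + of_int i' * h \<le> y" "y < o' + of_int i' * h + h"
    using y2 h_def by simp_all
  have a1: "of_int (i*d) < of_int (i'+1) * h / h"
  proof -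
    have "of_int i * (of_int d * h) < of_int i' * h + h" using Y1 Y2 by linarith
    then have "of_int (i*d) * h < of_int (i'+1) * h" by (simp add: algebra_simps)
    then show ?thesis using h0 by simp
  qed
  have b1: "i*d < i'+1"
  proof -
    have "real_of_int (i*d) < of_int (i'+1)" using a1 h0 by simp
    then show ?thesis by linarith
  qed
  have a2: "of_int i' * h < of_int (i*d + d) * h"
  proof -
    have "of_int i' * h < of_int i * (of_int d * h) + of_int d * h" using Y1 Y2 by linarith
    then show ?thesis by (simp add: algebra_simps)
  qed
  have b2: "i' < i*d + d"
  proof -
    have "real_of_int i' < of_int (i*d+d)" using a2 h0 by (simp add: mult_less_cancel_right)
    then show ?thesis by linarith
  qed
  have c1: "real_of_int (i*d) \<le> of_int i'" by (subst of_int_le_iff) (use b1 in linarith)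
  have c2: "real_of_int (i'+1) \<le> of_int (i*d+d)" by (subst of_int_le_iff) (use b2 in linarith)
  show ?thesis
  proof
    show "o' + of_int i * (\<Delta>/2^k) \<le> o' + of_int i' * (\<Delta>/2^k')"
      using mult_right_mono[OF c1 less_imp_le[OF h0]] hk by (simp add: h_def[symmetric] algebra_simps)
    show "o' + of_int i' * (\<Delta>/2^k') + \<Delta>/2^k' \<le> o' + of_int i * (\<Delta>/2^k) + \<Delta>/2^k"
      using mult_right_mono[OF c2 less_imp_le[OF h0]] hk by (simp add: h_def[symmetric] algebra_simps)
  qed
qed

lemma dy_same:
  fixes o' \<Delta> y :: real and i i' :: int and k :: nat
  assumes D: "\<Delta> > 0"
    and y1: "o' + of_int i * (\<Delta>/2^k) \<le> y" "y < o' + of_int i * (\<Delta>/2^k) + \<Delta>/2^k"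
    and y2: "o' + of_int i' * (\<Delta>/2^k) \<le> y" "y < o' + of_int i' * (\<Delta>/2^k) + \<Delta>/2^k"
  shows "i = i'"
proof -
  have "o' + of_int i * (\<Delta>/2^k) \<le> o' + of_int i' * (\<Delta>/2^k)"
       "o' + of_int i' * (\<Delta>/2^k) \<le> o' + of_int i * (\<Delta>/2^k)"
    using dy1[OF D order_refl y1 y2] dy1[OF D order_refl y2 y1] by auto
  then have "of_int i * (\<Delta>/2^k) = of_int i' * (\<Delta>/2^k)" by linarith
  then show ?thesis using D by simp
qed

definition cellk :: "pt \<Rightarrow> real \<Rightarrow> nat \<Rightarrow> int \<Rightarrow> int \<Rightarrow> pt \<times> real" where
  "cellk org \<Delta> k i j = ((fst org + of_int i * (\<Delta>/2^k), snd org + of_int j * (\<Delta>/2^k)), \<Delta>/2^k)"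

abbreviation sqc :: "pt \<times> real \<Rightarrow> pt set" where
  "sqc q \<equiv> sq (fst q) (snd q)"

lemma mem_sqc_cellk:
  "x \<in> sqc (cellk org \<Delta> k i j) \<longleftrightarrow>
    (fst org + of_int i * (\<Delta>/2^k) \<le> fst x \<and> fst x < fst org + of_int i * (\<Delta>/2^k) + \<Delta>/2^k) \<and>
    (snd org + of_int j * (\<Delta>/2^k) \<le> snd x \<and> snd x < snd org + of_int j * (\<Delta>/2^k) + \<Delta>/2^k)"
  by (cases x) (simp add: cellk_def sq_def)

lemma cellk_nested:
  assumes D: "\<Delta> > 0" and kk: "k \<le> k'"
    and x1: "x \<in> sqc (cellk org \<Delta> k i j)" and x2: "x \<in> sqc (cellk org \<Delta> k' i' j')"
  shows "sqc (cellk org \<Delta> k' i' j') \<subseteq> sqc (cellk org \<Delta> k i j)"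
proof
  fix y assume y: "y \<in> sqc (cellk org \<Delta> k' i' j')"
  have A: "fst org + of_int i * (\<Delta>/2^k) \<le> fst org + of_int i' * (\<Delta>/2^k')
       \<and> fst org + of_int i' * (\<Delta>/2^k') + \<Delta>/2^k' \<le> fst org + of_int i * (\<Delta>/2^k) + \<Delta>/2^k"
    using dy1[OF D kk] x1 x2 unfolding mem_sqc_cellk by blast
  have B: "snd org + of_int j * (\<Delta>/2^k) \<le> snd org + of_int j' * (\<Delta>/2^k')
       \<and> snd org + of_int j' * (\<Delta>/2^k') + \<Delta>/2^k' \<le> snd org + of_int j * (\<Delta>/2^k) + \<Delta>/2^k"
    using dy1[OF D kk] x1 x2 unfolding mem_sqc_cellk by blast
  show "y \<in> sqc (cellk org \<Delta> k i j)" using A B y unfolding mem_sqc_cellk by linarith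
qed

lemma cellk_same:
  assumes D: "\<Delta> > 0"
    and x1: "x \<in> sqc (cellk org \<Delta> k i j)" and x2: "x \<in> sqc (cellk org \<Delta> k i' j')"
  shows "i = i' \<and> j = j'"
  using dy_same[OF D] x1 x2 unfolding mem_sqc_cellk by blast

lemma cellk_inj:
  assumes D: "\<Delta> > 0" and e: "cellk org \<Delta> k i j = cellk org \<Delta> k' i' j'"
  shows "k = k' \<and> i = i' \<and> j = j'"
proof -
  have "\<Delta>/2^k = \<Delta>/2^k'" using e by (simp add: cellk_def)
  then have "(2::real)^k = 2^k'" using D by (simp add: field_simps)
  then have kk: "k = k'" by simp
  have "of_int i * (\<Delta>/2^k) = of_int i' * (\<Delta>/2^k)" "of_int j * (\<Delta>/2^k) = of_int j' * (\<Delta>/2^k)"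
    using e kk by (simp_all add: cellk_def)
  then show ?thesis using kk D by simp
qed

lemma cellk_side_pos: "\<Delta> > 0 \<Longrightarrow> snd (cellk org \<Delta> k i j) > 0"
  by (simp add: cellk_def)

lemma grid_cellk: "((fst org + real_of_int i * \<Delta>, snd org + real_of_int j * \<Delta>), \<Delta>) = cellk org \<Delta> 0 i j"
  by (simp add: cellk_def)

lemma child_cellk:
  assumes "(a, l) = cellk org \<Delta> k i j" and "kk \<in> {0, 1}" and "kk' \<in> {0, 1}"
  shows "((fst a + kk * (l / 2), snd a + kk' * (l / 2)), l / 2)
        = cellk org \<Delta> (Suc k) (2*i + (if kk = 0 then 0 else 1)) (2*j + (if kk' = 0 then 0 else 1))"
  using assms by (auto simp add: cellk_def field_simps)

lemma qtree_struct:
  assumes D: "\<Delta> > 0" and q: "(a0, l0) \<in> qtree n m p \<delta> U \<Delta> org"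
  shows "(\<exists>k i j. (a0, l0) = cellk org \<Delta> k i j) \<and>
    (\<forall>k i j. (a0, l0) = cellk org \<Delta> k i j \<longrightarrow> (\<forall>k' i' j' x. k' \<le> k \<longrightarrow> x \<in> sqc (cellk org \<Delta> k' i' j')
        \<longrightarrow> x \<in> sqc (a0, l0) \<longrightarrow> cellk org \<Delta> k' i' j' \<in> qtree n m p \<delta> U \<Delta> org
             \<and> (k' < k \<longrightarrow> splits n m p \<delta> (sqc (cellk org \<Delta> k' i' j')))))"
  using q
proof (induction a0 l0 rule: qtree.induct)
  case (grid i j)
  show ?case
  proof (rule conjI)
    show "\<exists>k ia ja. ((fst org + real_of_int i * \<Delta>, snd org + real_of_int j * \<Delta>), \<Delta>) = cellk org \<Delta> k ia ja"
      using grid_cellk by blast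
  next
  show "\<forall>k i0 j0. ((fst org + real_of_int i * \<Delta>, snd org + real_of_int j * \<Delta>), \<Delta>) = cellk org \<Delta> k i0 j0 \<longrightarrow> (\<forall>k' i' j' x. k' \<le> k \<longrightarrow> x \<in> sqc (cellk org \<Delta> k' i' j')
        \<longrightarrow> x \<in> sqc ((fst org + real_of_int i * \<Delta>, snd org + real_of_int j * \<Delta>), \<Delta>) \<longrightarrow> cellk org \<Delta> k' i' j' \<in> qtree n m p \<delta> U \<Delta> org
             \<and> (k' < k \<longrightarrow> splits n m p \<delta> (sqc (cellk org \<Delta> k' i' j'))))"
  proof (intro allI impI)
    fix k i0 j0 k' i' j' x
    assume e: "((fst org + real_of_int i * \<Delta>, snd org + real_of_int j * \<Delta>), \<Delta>) = cellk org \<Delta> k i0 j0"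
      and kk: "k' \<le> k" and x1: "x \<in> sqc (cellk org \<Delta> k' i' j')"
      and x2: "x \<in> sqc ((fst org + real_of_int i * \<Delta>, snd org + real_of_int j * \<Delta>), \<Delta>)"
    have "k = 0 \<and> i0 = i \<and> j0 = j" using cellk_inj[OF D, of org k i0 j0 0 i j] e grid_cellk by metis
    then have k0: "k = 0" "i0 = i" "j0 = j" by auto
    have k'0: "k' = 0" using kk k0 by simp
    have "i' = i \<and> j' = j" using cellk_same[OF D, of x org 0 i' j' i j] x1 x2 k'0 grid_cellk by metis
    then have eq: "cellk org \<Delta> k' i' j' = ((fst org + real_of_int i * \<Delta>, snd org + real_of_int j * \<Delta>), \<Delta>)"
      using k'0 grid_cellk by metis
    have "cellk org \<Delta> k' i' j' \<in> qtree n m p \<delta> U \<Delta> org" unfolding eq using grid.hyps by (rule qtree.grid)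
    then show "cellk org \<Delta> k' i' j' \<in> qtree n m p \<delta> U \<Delta> org \<and> (k' < k \<longrightarrow> splits n m p \<delta> (sqc (cellk org \<Delta> k' i' j')))" using kk k0 by simp
  qed
  qed
next
  case (child a l kk kk')
  from child.IH obtain k0 i0 j0 where c0: "(a, l) = cellk org \<Delta> k0 i0 j0" by blast
  define i1 where "i1 = 2*i0 + (if kk = 0 then 0 else 1)"
  define j1 where "j1 = 2*j0 + (if kk' = 0 then 0 else 1)"
  have ce: "((fst a + kk * (l / 2), snd a + kk' * (l / 2)), l / 2) = cellk org \<Delta> (Suc k0) i1 j1"
    unfolding i1_def j1_def using child_cellk[OF c0 child.hyps(3,4)] .
  have mem: "((fst a + kk * (l / 2), snd a + kk' * (l / 2)), l / 2) \<in> qtree n m p \<delta> U \<Delta> org"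
    using child.hyps by (rule qtree.child)
  have sub: "sqc (cellk org \<Delta> (Suc k0) i1 j1) \<subseteq> sqc (cellk org \<Delta> k0 i0 j0)"
  proof
    fix y assume y: "y \<in> sqc (cellk org \<Delta> (Suc k0) i1 j1)"
    have l: "l = \<Delta>/2^k0" "fst a = fst org + of_int i0 * (\<Delta>/2^k0)" "snd a = snd org + of_int j0 * (\<Delta>/2^k0)"
      using c0 by (auto simp: cellk_def)
    have "y \<in> sqc ((fst a + kk * (l / 2), snd a + kk' * (l / 2)), l / 2)" using y ce by simp
    then have "fst a + kk * (l/2) \<le> fst y" "fst y < fst a + kk * (l/2) + l/2"
      "snd a + kk' * (l/2) \<le> snd y" "snd y < snd a + kk' * (l/2) + l/2"
      by (auto simp: sq_def mem_Times_iff)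
    moreover have "l > 0" using l D by simp
    moreover have "0 \<le> kk * (l/2)" "kk * (l/2) \<le> l/2" "0 \<le> kk' * (l/2)" "kk' * (l/2) \<le> l/2"
      using child.hyps(3,4) \<open>l > 0\<close> by auto
    ultimately have "fst a \<le> fst y" "fst y < fst a + l" "snd a \<le> snd y" "snd y < snd a + l"
      by linarith+
    then show "y \<in> sqc (cellk org \<Delta> k0 i0 j0)" using c0[symmetric] by (auto simp: sq_def mem_Times_iff)
  qed
  show ?case
  proof (rule conjI)
    show "\<exists>k i j. ((fst a + kk * (l / 2), snd a + kk' * (l / 2)), l / 2) = cellk org \<Delta> k i j"
      using ce by blast
  next
  show "\<forall>k i j. ((fst a + kk * (l / 2), snd a + kk' * (l / 2)), l / 2) = cellk org \<Delta> k i j \<longrightarrow> (\<forall>k' i' j' x. k' \<le> k \<longrightarrow> x \<in> sqc (cellk org \<Delta> k' i' j')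
        \<longrightarrow> x \<in> sqc ((fst a + kk * (l / 2), snd a + kk' * (l / 2)), l / 2) \<longrightarrow> cellk org \<Delta> k' i' j' \<in> qtree n m p \<delta> U \<Delta> org
             \<and> (k' < k \<longrightarrow> splits n m p \<delta> (sqc (cellk org \<Delta> k' i' j'))))"
  proof (intro allI impI)
    fix k i j k' i' j' x
    assume e: "((fst a + kk * (l / 2), snd a + kk' * (l / 2)), l / 2) = cellk org \<Delta> k i j"
      and kk: "k' \<le> k" and x1: "x \<in> sqc (cellk org \<Delta> k' i' j')"
      and x2: "x \<in> sqc ((fst a + kk * (l / 2), snd a + kk' * (l / 2)), l / 2)"
    have "k = Suc k0 \<and> i = i1 \<and> j = j1" using cellk_inj[OF D] e ce by metis
    then have kij: "k = Suc k0" "i = i1" "j = j1" by auto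
    have x2': "x \<in> sqc (cellk org \<Delta> (Suc k0) i1 j1)" using x2 ce by metis
    show "cellk org \<Delta> k' i' j' \<in> qtree n m p \<delta> U \<Delta> org \<and>
          (k' < k \<longrightarrow> splits n m p \<delta> (sqc (cellk org \<Delta> k' i' j')))"
    proof (cases "k' = Suc k0")
      case True
      then have "i' = i1 \<and> j' = j1" using cellk_same[OF D] x1 x2' by metis
      then show ?thesis using True kij mem ce by simp
    next
      case False
      then have k'le: "k' \<le> k0" using kk kij by simp
      have x3: "x \<in> sqc (cellk org \<Delta> k0 i0 j0)" using sub x2' by blast
      have IH: "cellk org \<Delta> k' i' j' \<in> qtree n m p \<delta> U \<Delta> org \<and>
          (k' < k0 \<longrightarrow> splits n m p \<delta> (sqc (cellk org \<Delta> k' i' j')))"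
        using child.IH c0 k'le x1 x3 by (metis fst_conv snd_conv)
      show ?thesis
      proof (cases "k' = k0")
        case True
        then have "i' = i0 \<and> j' = j0" using cellk_same[OF D] x1 x3 by metis
        then have "cellk org \<Delta> k' i' j' = (a, l)" using True c0 by simp
        then show ?thesis using IH child.hyps(2) by simp
      next
        case False
        then show ?thesis using IH k'le kij by simp
      qed
    qed
  qed
  qed
qed

lemma qtree_cellk:
  assumes D: "\<Delta> > 0" and q: "q \<in> qtree n m p \<delta> U \<Delta> org"
  shows "\<exists>k i j. q = cellk org \<Delta> k i j"
proof -
  have "(fst q, snd q) \<in> qtree n m p \<delta> U \<Delta> org" using q by simp
  from qtree_struct[OF D this] show ?thesis by simp
qed

lemma qtree_anc:
  assumes D: "\<Delta> > 0" and q: "cellk org \<Delta> k i j \<in> qtree n m p \<delta> U \<Delta> org"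
    and kk: "k' \<le> k" and x1: "x \<in> sqc (cellk org \<Delta> k' i' j')" and x2: "x \<in> sqc (cellk org \<Delta> k i j)"
  shows "cellk org \<Delta> k' i' j' \<in> qtree n m p \<delta> U \<Delta> org \<and> (k' < k \<longrightarrow> splits n m p \<delta> (sqc (cellk org \<Delta> k' i' j')))"
proof -
  have "(fst (cellk org \<Delta> k i j), snd (cellk org \<Delta> k i j)) \<in> qtree n m p \<delta> U \<Delta> org" using q by simp
  note S = conjunct2[OF qtree_struct[OF D this]]
  show ?thesis using S[rule_format, of k i j k' x i' j'] kk x1 x2 by simp
qed

lemma leaf_disjoint:
  assumes D: "\<Delta> > 0" and q1: "q1 \<in> leaf_cells n m p \<delta> U \<Delta> org" and q2: "q2 \<in> leaf_cells n m p \<delta> U \<Delta> org"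
    and x1: "x \<in> sqc q1" and x2: "x \<in> sqc q2"
  shows "q1 = q2"
proof -
  have lem: "q1 = q2" if q1: "q1 \<in> leaf_cells n m p \<delta> U \<Delta> org" and q2: "q2 \<in> leaf_cells n m p \<delta> U \<Delta> org"
    and x1: "x \<in> sqc q1" and x2: "x \<in> sqc q2"
    and c1: "q1 = cellk org \<Delta> k1 i1 j1" and c2: "q2 = cellk org \<Delta> k2 i2 j2" and kk: "k1 \<le> k2"
    for q1 q2 k1 i1 j1 k2 i2 j2
  proof -
    have m2: "cellk org \<Delta> k2 i2 j2 \<in> qtree n m p \<delta> U \<Delta> org" using q2 c2 by (simp add: leaf_cells_def)
    have "k1 < k2 \<longrightarrow> splits n m p \<delta> (sqc (cellk org \<Delta> k1 i1 j1))"
      using qtree_anc[OF D m2 kk] x1 x2 c1 c2 by auto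
    moreover have "\<not> splits n m p \<delta> (sqc q1)" using q1 by (simp add: leaf_cells_def)
    ultimately have "k1 = k2" using kk c1 by auto
    then have "i1 = i2 \<and> j1 = j2" using cellk_same[OF D] x1 x2 c1 c2 by metis
    then show ?thesis using c1 c2 \<open>k1 = k2\<close> by simp
  qed
  have "q1 \<in> qtree n m p \<delta> U \<Delta> org" using q1 by (simp add: leaf_cells_def)
  then obtain k1 i1 j1 where c1: "q1 = cellk org \<Delta> k1 i1 j1"
    using qtree_cellk[OF D] by blast
  have "q2 \<in> qtree n m p \<delta> U \<Delta> org" using q2 by (simp add: leaf_cells_def)
  then obtain k2 i2 j2 where c2: "q2 = cellk org \<Delta> k2 i2 j2"
    using qtree_cellk[OF D] by blast
  show ?thesis
  proof (cases "k1 \<le> k2")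
    case True then show ?thesis using lem[OF q1 q2 x1 x2 c1 c2] by simp
  next
    case False then show ?thesis using lem[OF q2 q1 x2 x1 c2 c1] by simp
  qed
qed

lemma leaf_side_pos:
  assumes D: "\<Delta> > 0" and q: "q \<in> leaf_cells n m p \<delta> U \<Delta> org"
  shows "snd q > 0"
proof -
  have "q \<in> qtree n m p \<delta> U \<Delta> org" using q by (simp add: leaf_cells_def)
  then obtain k i j where "q = cellk org \<Delta> k i j"
    using qtree_cellk[OF D] by blast
  then show ?thesis using D by (simp add: cellk_def)
qed

lemma dist_in_sq:
  assumes x: "x \<in> sq a l" and y: "y \<in> sq a l"
  shows "dist x y \<le> 2 * l"
proof -
  obtain x1 x2 y1 y2 where xy: "x = (x1, x2)" "y = (y1, y2)" by (cases x, cases y) auto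
  have b: "\<bar>x1 - y1\<bar> < l" "\<bar>x2 - y2\<bar> < l" using x y xy by (auto simp: sq_def)
  have "dist x y = sqrt ((x1 - y1)^2 + (x2 - y2)^2)" using xy by (simp add: dist_Pair_Pair dist_real_def)
  also have "\<dots> \<le> \<bar>x1 - y1\<bar> + \<bar>x2 - y2\<bar>" by (rule sqrt_sum_squares_le_sum_abs)
  finally show ?thesis using b by linarith
qed

lemma sq_nonempty: "l > 0 \<Longrightarrow> a \<in> sq a l"
  by (cases a) (auto simp: sq_def)

lemma bdd_dist_sq: "bdd_above ((\<lambda>x. dist p x) ` sq a l)"
proof -
  have "dist p x \<le> dist p a + 2 * l" if "x \<in> sq a l" for x
  proof -
    have "l > 0" using that by (cases a, cases x) (auto simp: sq_def)
    then have "dist a x \<le> 2 * l" using dist_in_sq[OF sq_nonempty that] by simp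
    then show ?thesis using dist_triangle[of p x a] by linarith
  qed
  then show ?thesis by (intro bdd_aboveI2) blast
qed

lemma bdd_below_dist_sq: "bdd_below ((\<lambda>x. dist p x) ` sq a l)"
  by (rule bdd_belowI2[where m=0]) simp

lemma small_nosplit:
  assumes r: "r = \<delta> / sqrt (real n * real m)" and rpos: "r > 0" and dpos: "\<delta> > 0"
  shows "\<exists>\<epsilon>>0. \<forall>a l. x \<in> sq a l \<longrightarrow> l < \<epsilon> \<longrightarrow> \<not> splits n m p \<delta> (sq a l)"
proof (cases "\<exists>i<n. dist (p i) x < r")
  case True
  then obtain i where i: "i < n" "dist (p i) x < r" by blast
  show ?thesis
  proof (intro exI[of _ "(r - dist (p i) x) / 2"] conjI allI impI)
    show "(r - dist (p i) x) / 2 > 0" using i by simp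
    fix a l assume x: "x \<in> sq a l" and l: "l < (r - dist (p i) x) / 2"
    have "near_cell (p i) r (sq a l)" unfolding near_cell_def
    proof
      fix y assume y: "y \<in> sq a l"
      have "dist x y \<le> 2 * l" by (rule dist_in_sq[OF x y])
      then show "dist (p i) y \<le> r" using dist_triangle[of "p i" y x] l by (simp add: field_simps)
    qed
    then show "\<not> splits n m p \<delta> (sq a l)" using i r unfolding splits_def by blast
  qed
next
  case False
  then have far: "\<And>i. i < n \<Longrightarrow> dist (p i) x \<ge> r" by (meson not_less)
  show ?thesis
  proof (intro exI[of _ "\<delta> * r / (2 * (2 + \<delta>))"] conjI allI impI)
    show "\<delta> * r / (2 * (2 + \<delta>)) > 0" using rpos dpos by simp
    fix a l assume x: "x \<in> sq a l" and l: "l < \<delta> * r / (2 * (2 + \<delta>))"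
    have lpos: "l > 0" using x by (cases a, cases x) (auto simp: sq_def)
    have l2: "2 * l * (2 + \<delta>) \<le> \<delta> * r" using l dpos by (simp add: field_simps)
    have "\<not> ratio_exceeds (p i) \<delta> (sq a l)" if i: "i < n" for i
    proof -
      define d where "d = dist (p i) x"
      have dr: "d \<ge> r" using far[OF i] d_def by simp
      have ne: "sq a l \<noteq> {}" using x by blast
      have up: "dist (p i) y \<le> d + 2 * l" and lo: "dist (p i) y \<ge> d - 2 * l" if y: "y \<in> sq a l" for y
      proof -
        have "dist x y \<le> 2 * l" by (rule dist_in_sq[OF x y])
        then show "dist (p i) y \<le> d + 2 * l" "dist (p i) y \<ge> d - 2 * l"
          using dist_triangle[of "p i" y x] dist_triangle[of "p i" x y] d_def by (simp_all add: dist_commute)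
      qed
      have S: "(SUP y\<in>sq a l. dist (p i) y) \<le> d + 2 * l" using ne up by (intro cSUP_least) auto
      have I: "(INF y\<in>sq a l. dist (p i) y) \<ge> d - 2 * l" using ne lo by (intro cINF_greatest) auto
      have "d + 2 * l \<le> (1 + \<delta>) * (d - 2 * l)"
      proof -
        have "\<delta> * d \<ge> \<delta> * r" using dr dpos by simp
        then show ?thesis using l2 by (simp add: algebra_simps)
      qed
      also have "\<dots> \<le> (1 + \<delta>) * (INF y\<in>sq a l. dist (p i) y)" using I dpos by simp
      finally show ?thesis using S unfolding ratio_exceeds_def by linarith
    qed
    then show "\<not> splits n m p \<delta> (sq a l)" unfolding splits_def by blast
  qed
qed

lemma leaf_cover:
  assumes D: "\<Delta> > 0" and r: "r = \<delta> / sqrt (real n * real m)" and rpos: "r > 0" and dpos: "\<delta> > 0"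
    and xU: "x \<in> U"
  shows "\<exists>q\<in>leaf_cells n m p \<delta> U \<Delta> org. x \<in> sqc q"
proof (rule ccontr)
  assume no: "\<not> (\<exists>q\<in>leaf_cells n m p \<delta> U \<Delta> org. x \<in> sqc q)"
  have split: "splits n m p \<delta> (sqc q)" if "q \<in> qtree n m p \<delta> U \<Delta> org" "x \<in> sqc q" for q
    using no that unfolding leaf_cells_def by blast
  have chain: "\<exists>i j. cellk org \<Delta> k i j \<in> qtree n m p \<delta> U \<Delta> org \<and> x \<in> sqc (cellk org \<Delta> k i j)" for k
  proof (induction k)
    case 0
    define i where "i = \<lfloor>(fst x - fst org) / \<Delta>\<rfloor>"
    define j where "j = \<lfloor>(snd x - snd org) / \<Delta>\<rfloor>"
    have i1: "of_int i \<le> (fst x - fst org) / \<Delta>" "(fst x - fst org) / \<Delta> < of_int i + 1"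
      unfolding i_def by linarith+
    have j1: "of_int j \<le> (snd x - snd org) / \<Delta>" "(snd x - snd org) / \<Delta> < of_int j + 1"
      unfolding j_def by linarith+
    have i2: "of_int i * \<Delta> \<le> fst x - fst org" "fst x - fst org < of_int i * \<Delta> + \<Delta>"
      using i1 D by (simp_all add: field_simps)
    have j2: "of_int j * \<Delta> \<le> snd x - snd org" "snd x - snd org < of_int j * \<Delta> + \<Delta>"
      using j1 D by (simp_all add: field_simps)
    have xin: "x \<in> sqc (cellk org \<Delta> 0 i j)"
      unfolding mem_sqc_cellk using i2 j2 by simp
    have "sq (fst org + real_of_int i * \<Delta>, snd org + real_of_int j * \<Delta>) \<Delta> \<inter> U \<noteq> {}"
      using xin xU by (auto simp: cellk_def)
    then have "((fst org + real_of_int i * \<Delta>, snd org + real_of_int j * \<Delta>), \<Delta>) \<in> qtree n m p \<delta> U \<Delta> org"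
      by (rule qtree.grid)
    then show ?case using xin grid_cellk by metis
  next
    case (Suc k)
    then obtain i j where c: "cellk org \<Delta> k i j \<in> qtree n m p \<delta> U \<Delta> org" "x \<in> sqc (cellk org \<Delta> k i j)"
      by blast
    obtain a l where al: "(a, l) = cellk org \<Delta> k i j" by (metis prod.collapse)
    have sp: "splits n m p \<delta> (sq a l)" using split[OF c] al by (metis fst_conv snd_conv)
    define h where "h = \<Delta> / 2 ^ Suc k"
    have hk: "\<Delta> / 2^k = 2 * h" unfolding h_def by simp
    define e1 :: int where "e1 = (if fst x < fst org + of_int (2*i+1) * h then 0 else 1)"
    define e2 :: int where "e2 = (if snd x < snd org + of_int (2*j+1) * h then 0 else 1)"
    have e1s: "real_of_int e1 \<in> {0, 1}" "real_of_int e2 \<in> {0, 1}" unfolding e1_def e2_def by auto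
    have mem: "((fst a + real_of_int e1 * (l / 2), snd a + real_of_int e2 * (l / 2)), l / 2) \<in> qtree n m p \<delta> U \<Delta> org"
      using c(1) al sp e1s by (intro qtree.child) (auto simp del: insert_iff)
    have ce: "((fst a + real_of_int e1 * (l / 2), snd a + real_of_int e2 * (l / 2)), l / 2)
        = cellk org \<Delta> (Suc k) (2*i + e1) (2*j + e2)"
      using child_cellk[OF al e1s] unfolding e1_def e2_def by (simp split: if_splits)
    have x0: "fst org + of_int i * (2*h) \<le> fst x" "fst x < fst org + of_int i * (2*h) + 2*h"
      "snd org + of_int j * (2*h) \<le> snd x" "snd x < snd org + of_int j * (2*h) + 2*h"
      using c(2) hk unfolding mem_sqc_cellk by simp_all
    have "x \<in> sqc (cellk org \<Delta> (Suc k) (2*i + e1) (2*j + e2))"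
      unfolding mem_sqc_cellk h_def[symmetric] using x0
      by (simp add: e1_def e2_def algebra_simps)
    then show ?case using mem ce by metis
  qed
  obtain \<epsilon> where eps: "\<epsilon> > 0" "\<forall>a l. x \<in> sq a l \<longrightarrow> l < \<epsilon> \<longrightarrow> \<not> splits n m p \<delta> (sq a l)"
    using small_nosplit[OF r rpos dpos] by blast
  obtain k where k: "\<Delta> / \<epsilon> < 2 ^ k" using real_arch_pow[of 2 "\<Delta> / \<epsilon>"] by auto
  have kl: "\<Delta> / 2 ^ k < \<epsilon>" using k eps(1) by (simp add: field_simps)
  obtain i j where c: "cellk org \<Delta> k i j \<in> qtree n m p \<delta> U \<Delta> org" "x \<in> sqc (cellk org \<Delta> k i j)"
    using chain by blast
  have "splits n m p \<delta> (sqc (cellk org \<Delta> k i j))" using split[OF c] .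
  moreover have "snd (cellk org \<Delta> k i j) < \<epsilon>" using kl by (simp add: cellk_def)
  ultimately show False using eps(2) c(2) by blast
qed

lemma tri_compact: "compact (tri u v w)"
  unfolding tri_def by (rule finite_imp_compact_convex_hull) simp

lemma tri_sets_borel: "tri u v w \<in> sets borel"
  apply (rule borel_closed)
  apply (rule compact_imp_closed)
  apply (rule tri_compact)
  done

lemma tri_sets[measurable]: "tri u v w \<in> sets lborel"
  using tri_sets_borel by simp

lemma tri_fin: "emeasure lborel (tri u v w) < top"
  using emeasure_bounded_finite[OF compact_imp_bounded[OF tri_compact]] by simp

lemma tri_int_fin: "emeasure lborel (tri u v w \<inter> S) < top"
proof -
  have "emeasure lborel (tri u v w \<inter> S) \<le> emeasure lborel (tri u v w)"
    by (rule emeasure_mono) (auto simp: tri_sets_borel)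
  then show ?thesis using tri_fin[of u v w] by (meson le_less_trans)
qed

lemma sq_eq: "sq a l = {x. fst a \<le> fst x \<and> fst x < fst a + l \<and> snd a \<le> snd x \<and> snd x < snd a + l}"
  by (auto simp: sq_def)

lemma sq_sets[measurable]: "sq a l \<in> sets lborel"
proof -
  have "sq a l = {x. fst a \<le> fst x} \<inter> {x. fst x < fst a + l} \<inter> {x. snd a \<le> snd x} \<inter> {x. snd x < snd a + l}"
    unfolding sq_eq by auto
  moreover have "closed {x::pt. fst a \<le> fst x}" "closed {x::pt. snd a \<le> snd x}"
    by (intro closed_Collect_le continuous_intros)+
  moreover have "open {x::pt. fst x < fst a + l}" "open {x::pt. snd x < snd a + l}"
    by (intro open_Collect_less continuous_intros)+
  ultimately show ?thesis by (simp add: borel_closed borel_open sets.Int)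
qed

lemma sq_bounded: "bounded (sq a l)"
proof -
  have "sq a l \<subseteq> cbox a (fst a + l, snd a + l)"
    by (cases a) (auto simp: sq_def cbox_Pair_eq)
  then show ?thesis by (rule bounded_subset[OF bounded_cbox])
qed

lemma sq_fin: "emeasure lborel (sq a l) < top"
  using emeasure_bounded_finite[OF sq_bounded] by simp

lemma dens_meas[measurable]: "tri_dens m a b c \<in> borel_measurable lborel"
  unfolding tri_dens_def by measurable

lemma dens_nonneg: "0 \<le> tri_dens m a b c x"
  unfolding tri_dens_def by (simp add: sum_nonneg)

lemma dens_le: "tri_dens m a b c x \<le> real m"
proof -
  have "tri_dens m a b c x \<le> (\<Sum>j<m. 1)" unfolding tri_dens_def
    by (rule sum_mono) (simp add: indicator_def)
  then show ?thesis by simp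
qed

lemma dens_zero: "x \<notin> tri_union m a b c \<Longrightarrow> tri_dens m a b c x = 0"
  unfolding tri_dens_def tri_union_def by (auto intro!: sum.neutral simp: indicator_def)

lemma dens_integrable: "integrable lborel (tri_dens m a b c)"
  unfolding tri_dens_def
  by (intro Bochner_Integration.integrable_sum integrable_real_indicator) (simp_all add: tri_fin tri_sets_borel)

lemma dens_integral: "integral\<^sup>L lborel (tri_dens m a b c) = (\<Sum>j<m. measure lborel (tri (a j) (b j) (c j)))"
proof -
  have "integral\<^sup>L lborel (\<lambda>x. \<Sum>j<m. indicator (tri (a j) (b j) (c j)) x :: real)
      = (\<Sum>j<m. integral\<^sup>L lborel (indicator (tri (a j) (b j) (c j)) :: pt \<Rightarrow> real))"
    by (rule Bochner_Integration.integral_sum) (intro integrable_real_indicator; simp add: tri_fin tri_sets_borel)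
  then show ?thesis unfolding tri_dens_def by simp
qed

lemma cell_mass_integral:
  "cell_mass m a b c q = integral\<^sup>L lborel (\<lambda>x. indicator (sqc q) x * tri_dens m a b c x)"
proof -
  have "(\<lambda>x. indicator (sqc q) x * tri_dens m a b c x)
      = (\<lambda>x. \<Sum>j<m. indicator (tri (a j) (b j) (c j) \<inter> sqc q) x :: real)"
    unfolding tri_dens_def by (auto simp: sum_distrib_left indicator_inter_arith mult.commute)
  moreover have "integral\<^sup>L lborel (\<lambda>x. \<Sum>j<m. indicator (tri (a j) (b j) (c j) \<inter> sqc q) x :: real)
      = (\<Sum>j<m. integral\<^sup>L lborel (indicator (tri (a j) (b j) (c j) \<inter> sqc q) :: pt \<Rightarrow> real))"
    by (rule Bochner_Integration.integral_sum) (intro integrable_real_indicator; simp add: tri_int_fin tri_sets_borel)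
  ultimately show ?thesis unfolding cell_mass_def by simp
qed

locale setting =
  fixes n m :: nat and p :: "nat \<Rightarrow> pt" and w :: "nat \<Rightarrow> real"
    and a b c :: "nat \<Rightarrow> pt" and \<delta> :: real and org :: pt
    and t :: "pt \<times> real \<Rightarrow> pt" and \<nu> :: "nat \<Rightarrow> pt \<times> real \<Rightarrow> real"
    and g :: "nat \<Rightarrow> pt \<Rightarrow> real"
  assumes w_pos: "\<forall>i<n. 0 < w i"
    and w_sum: "(\<Sum>i<n. w i) = 1"
    and area: "(\<Sum>j<m. measure lborel (tri (a j) (b j) (c j))) = 1"
    and delta: "0 < \<delta>" "\<delta> \<le> 1 / (2 * pi)"
    and t_in: "\<forall>q\<in>leaf_cells n m p \<delta> (tri_union m a b c) (longest_edge m a b c) org.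
                 t q \<in> csq (fst q) (snd q)"
    and nu_plan: "is_disc_plan n w (leaf_cells n m p \<delta> (tri_union m a b c) (longest_edge m a b c) org)
                    (cell_mass m a b c) \<nu>"
    and nu_opt: "\<forall>\<nu>'. is_disc_plan n w (leaf_cells n m p \<delta> (tri_union m a b c) (longest_edge m a b c) org)
                    (cell_mass m a b c) \<nu>' \<longrightarrow>
                  disc_cost n p (leaf_cells n m p \<delta> (tri_union m a b c) (longest_edge m a b c) org) t \<nu>
                  \<le> disc_cost n p (leaf_cells n m p \<delta> (tri_union m a b c) (longest_edge m a b c) org) t \<nu>'"
    and g_plan: "is_plan n w (tri_dens m a b c) g"
begin

abbreviation "U \<equiv> tri_union m a b c"
abbreviation "\<Delta> \<equiv> longest_edge m a b c"
abbreviation "Q \<equiv> leaf_cells n m p \<delta> U \<Delta> org"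
abbreviation "D \<equiv> tri_dens m a b c"
definition "r = \<delta> / sqrt (real n * real m)"

lemma n_pos: "n \<ge> 1"
  using w_sum by (cases n) auto

lemma m_pos: "m \<ge> 1"
  using area by (cases m) auto

lemma r_pos: "r > 0"
  using n_pos m_pos delta by (simp add: r_def)

lemma Delta_pos: "\<Delta> > 0"
proof (rule ccontr)
  assume "\<not> \<Delta> > 0"
  then have le: "\<Delta> \<le> 0" by simp
  let ?S = "\<Union>j<m. {dist (a j) (b j), dist (b j) (c j), dist (c j) (a j)}"
  have fin: "finite ?S" by simp
  have "measure lborel (tri (a j) (b j) (c j)) = 0" if j: "j < m" for j
  proof -
    have "dist (a j) (b j) \<le> \<Delta>" "dist (b j) (c j) \<le> \<Delta>"
      unfolding longest_edge_def using j by (auto intro!: Max_ge[OF fin])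
    then have "dist (a j) (b j) \<le> 0" "dist (b j) (c j) \<le> 0" using le by linarith+
    then have "a j = b j" "b j = c j" by simp_all
    then have "tri (a j) (b j) (c j) = {a j}" by (simp add: tri_def)
    then show ?thesis by simp
  qed
  then have "(\<Sum>j<m. measure lborel (tri (a j) (b j) (c j))) = 0" by simp
  then show False using area by simp
qed

lemma Q_finite: "finite Q"
proof (rule ccontr)
  assume inf: "\<not> finite Q"
  have "(\<Sum>q\<in>Q. \<nu> 0 q) = w 0" using nu_plan n_pos unfolding is_disc_plan_def by auto
  moreover have "(\<Sum>q\<in>Q. \<nu> 0 q) = 0" using inf by simp
  ultimately show False using w_pos n_pos by auto
qed

lemma Q_side: "q \<in> Q \<Longrightarrow> snd q > 0"
  using leaf_side_pos[OF Delta_pos] by blast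

lemma Q_disj: "q1 \<in> Q \<Longrightarrow> q2 \<in> Q \<Longrightarrow> x \<in> sqc q1 \<Longrightarrow> x \<in> sqc q2 \<Longrightarrow> q1 = q2"
  using leaf_disjoint[OF Delta_pos] by blast

lemma Q_cover: "x \<in> U \<Longrightarrow> \<exists>q\<in>Q. x \<in> sqc q"
  using leaf_cover[OF Delta_pos r_def r_pos delta(1)] by blast

lemma ind_sum_le1:
  assumes "Q' \<subseteq> Q"
  shows "(\<Sum>q\<in>Q'. indicator (sqc q) x :: real) \<le> 1"
    and "q0 \<in> Q' \<Longrightarrow> x \<in> sqc q0 \<Longrightarrow> (\<Sum>q\<in>Q'. indicator (sqc q) x :: real) = 1"
proof -
  have fin: "finite Q'" using Q_finite assms finite_subset by blast
  have one: "(\<Sum>q\<in>Q'. indicator (sqc q) x :: real) = 1" if q0: "q0 \<in> Q'" "x \<in> sqc q0" for q0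
  proof -
    have "(\<Sum>q\<in>Q'. indicator (sqc q) x :: real) = indicator (sqc q0) x + (\<Sum>q\<in>Q' - {q0}. indicator (sqc q) x)"
      using fin q0 by (simp add: sum.remove)
    also have "(\<Sum>q\<in>Q' - {q0}. indicator (sqc q) x :: real) = 0"
    proof (rule sum.neutral, rule ballI)
      fix q assume q: "q \<in> Q' - {q0}"
      have "x \<notin> sqc q" using Q_disj[of q q0 x] q q0 assms by auto
      then show "indicator (sqc q) x = (0::real)" by simp
    qed
    finally show ?thesis using q0 by simp
  qed
  then show "q0 \<in> Q' \<Longrightarrow> x \<in> sqc q0 \<Longrightarrow> (\<Sum>q\<in>Q'. indicator (sqc q) x :: real) = 1" by blast
  show "(\<Sum>q\<in>Q'. indicator (sqc q) x :: real) \<le> 1"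
  proof (cases "\<exists>q0\<in>Q'. x \<in> sqc q0")
    case True then show ?thesis using one by auto
  next
    case False
    then have "(\<Sum>q\<in>Q'. indicator (sqc q) x :: real) = 0" by (intro sum.neutral) auto
    then show ?thesis by simp
  qed
qed

lemma ind_sum_U: "x \<in> U \<Longrightarrow> (\<Sum>q\<in>Q. indicator (sqc q) x :: real) = 1"
  using Q_cover ind_sum_le1(2)[OF order_refl] by blast

lemma D_ind_sum: "D x * (\<Sum>q\<in>Q. indicator (sqc q) x) = D x"
  by (cases "x \<in> U") (simp_all add: ind_sum_U dens_zero)

end

context setting begin

definition "Mx i q = (SUP y\<in>sqc q. dist (p i) y)"
definition "mn i q = (INF y\<in>sqc q. dist (p i) y)"
definition "Nq q \<longleftrightarrow> (\<exists>k<n. near_cell (p k) r (sqc q))"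
definition "e q = (if Nq q then 2 * r else 0)"

lemma sq_ne: "q \<in> Q \<Longrightarrow> sqc q \<noteq> {}"
  using sq_nonempty Q_side by blast

lemma Mx_ge: "y \<in> sqc q \<Longrightarrow> dist (p i) y \<le> Mx i q"
  unfolding Mx_def by (rule cSUP_upper[OF _ bdd_dist_sq])

lemma mn_le: "y \<in> sqc q \<Longrightarrow> mn i q \<le> dist (p i) y"
  unfolding mn_def by (rule cINF_lower[OF bdd_below_dist_sq])

lemma mn_nonneg: "q \<in> Q \<Longrightarrow> 0 \<le> mn i q"
  unfolding mn_def using sq_ne by (intro cINF_greatest) auto

lemma Mx_nonneg: "q \<in> Q \<Longrightarrow> 0 \<le> Mx i q"
proof -
  assume q: "q \<in> Q"
  then obtain y where "y \<in> sqc q" using sq_ne by blast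
  then show ?thesis using Mx_ge[of y q i] by (meson order_trans zero_le_dist)
qed

lemma csq_closure: "q \<in> Q \<Longrightarrow> csq (fst q) (snd q) \<subseteq> closure (sqc q)"
proof -
  assume q: "q \<in> Q"
  have l: "snd q > 0" using Q_side[OF q] .
  show ?thesis using l unfolding csq_def sq_def closure_Times by simp
qed

lemma t_bounds:
  assumes q: "q \<in> Q"
  shows "mn i q \<le> dist (p i) (t q)" "dist (p i) (t q) \<le> Mx i q"
proof -
  have tq: "t q \<in> closure (sqc q)" using t_in q csq_closure by blast
  have c1: "closed {y. mn i q \<le> dist (p i) y}" by (intro closed_Collect_le continuous_intros)
  have c2: "closed {y. dist (p i) y \<le> Mx i q}" by (intro closed_Collect_le continuous_intros)
  have "closure (sqc q) \<subseteq> {y. mn i q \<le> dist (p i) y}"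
    by (rule closure_minimal[OF _ c1]) (auto intro: mn_le)
  then show "mn i q \<le> dist (p i) (t q)" using tq by blast
  have "closure (sqc q) \<subseteq> {y. dist (p i) y \<le> Mx i q}"
    by (rule closure_minimal[OF _ c2]) (auto intro: Mx_ge)
  then show "dist (p i) (t q) \<le> Mx i q" using tq by blast
qed

lemma dichotomy: "q \<in> Q \<Longrightarrow> Nq q \<or> (\<forall>i<n. Mx i q \<le> (1 + \<delta>) * mn i q)"
  unfolding leaf_cells_def splits_def Nq_def ratio_exceeds_def Mx_def mn_def r_def
  by (auto simp: not_less) (meson leD)

lemma near_bound:
  assumes q: "q \<in> Q" and N: "Nq q"
  shows "Mx i q \<le> mn i q + 2 * r"
proof -
  obtain k where k: "k < n" "near_cell (p k) r (sqc q)" using N unfolding Nq_def by blast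
  have dz: "dist (p i) y \<le> dist (p i) z + 2 * r" if y: "y \<in> sqc q" and z: "z \<in> sqc q" for y z
  proof -
    have "dist (p k) y \<le> r" "dist (p k) z \<le> r" using k(2) y z unfolding near_cell_def by auto
    then have "dist z y \<le> 2 * r" using dist_triangle[of z y "p k"] by (simp add: dist_commute)
    then show ?thesis using dist_triangle[of "p i" y z] by linarith
  qed
  have "Mx i q - 2 * r \<le> dist (p i) z" if z: "z \<in> sqc q" for z
  proof -
    have "Mx i q \<le> dist (p i) z + 2 * r"
      unfolding Mx_def using sq_ne[OF q] dz[OF _ z] by (intro cSUP_least) auto
    then show ?thesis by simp
  qed
  then have "Mx i q - 2 * r \<le> mn i q"
    unfolding mn_def using sq_ne[OF q] by (intro cINF_greatest) auto
  then show ?thesis by simp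
qed

lemma e_nonneg: "0 \<le> e q"
  using r_pos by (simp add: e_def)

lemma K1: assumes q: "q \<in> Q" and i: "i < n"
  shows "dist (p i) (t q) \<le> (1 + \<delta>) * mn i q + e q"
proof (cases "Nq q")
  case True
  have "dist (p i) (t q) \<le> mn i q + 2 * r" using t_bounds(2)[OF q, of i] near_bound[OF q True, of i] by simp
  moreover have "mn i q \<le> (1 + \<delta>) * mn i q"
  proof -
    have "0 \<le> \<delta> * mn i q" using mn_nonneg[OF q, of i] delta by simp
    then show ?thesis by (simp add: distrib_right)
  qed
  ultimately show ?thesis using True by (simp add: e_def)
next
  case False
  then have "Mx i q \<le> (1 + \<delta>) * mn i q" using dichotomy[OF q] i by blast
  then show ?thesis using t_bounds(2)[OF q, of i] False by (simp add: e_def)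
qed

lemma K2: assumes q: "q \<in> Q" and i: "i < n"
  shows "Mx i q \<le> (1 + \<delta>) * dist (p i) (t q) + e q"
proof (cases "Nq q")
  case True
  have "Mx i q \<le> dist (p i) (t q) + 2 * r"
    using t_bounds(1)[OF q, of i] near_bound[OF q True, of i] by simp
  moreover have "dist (p i) (t q) \<le> (1 + \<delta>) * dist (p i) (t q)"
  proof -
    have "0 \<le> \<delta> * dist (p i) (t q)" using delta by simp
    then show ?thesis by (simp add: distrib_right)
  qed
  ultimately show ?thesis using True by (simp add: e_def)
next
  case False
  then have "Mx i q \<le> (1 + \<delta>) * mn i q" using dichotomy[OF q] i by blast
  also have "\<dots> \<le> (1 + \<delta>) * dist (p i) (t q)"
    using t_bounds(1)[OF q, of i] delta by (intro mult_left_mono) auto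
  finally show ?thesis using False by (simp add: e_def)
qed

end

context setting begin

lemma g_nonneg: "i < n \<Longrightarrow> 0 \<le> g i x"
  using g_plan unfolding is_plan_def by blast
lemma g_int: "i < n \<Longrightarrow> integrable lborel (g i)"
  using g_plan unfolding is_plan_def by blast
lemma g_total: "i < n \<Longrightarrow> integral\<^sup>L lborel (g i) = w i"
  using g_plan unfolding is_plan_def by blast
lemma g_AE: "AE x in lborel. (\<Sum>i<n. g i x) = D x"
  using g_plan unfolding is_plan_def by blast
lemma g_meas: "i < n \<Longrightarrow> g i \<in> borel_measurable lborel"
  using g_int by (rule borel_measurable_integrable)

lemma g_cover_AE:
  assumes i: "i < n"
  shows "AE x in lborel. g i x * (\<Sum>q\<in>Q. indicator (sqc q) x) = g i x"
  using g_AE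
proof (rule AE_mp, intro AE_I2 impI)
  fix x assume s: "(\<Sum>i<n. g i x) = D x"
  show "g i x * (\<Sum>q\<in>Q. indicator (sqc q) x) = g i x"
  proof (cases "x \<in> U")
    case True then show ?thesis by (simp add: ind_sum_U)
  next
    case False
    then have "(\<Sum>i<n. g i x) = 0" using s dens_zero by simp
    then have "\<forall>j\<in>{..<n}. g j x = 0" using g_nonneg by (subst sum_nonneg_eq_0_iff[symmetric]) auto
    then show ?thesis using i by simp
  qed
qed

lemma cm_nonneg: "0 \<le> cell_mass m a b c q"
  unfolding cell_mass_def by (simp add: sum_nonneg)

lemma cm_int: "cell_mass m a b c q = integral\<^sup>L lborel (\<lambda>x. D x * indicator (sqc q) x)"
  unfolding cell_mass_integral by (simp add: mult.commute)

lemma sq_sets_borel: "sq a' l \<in> sets borel"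
  using sq_sets by simp

lemma gq_int: "i < n \<Longrightarrow> integrable lborel (\<lambda>x. g i x * indicator (sqc q) x)"
  by (rule integrable_real_mult_indicator[OF _ g_int]) (simp_all add: sq_sets_borel)

lemma Dq_int: "integrable lborel (\<lambda>x. D x * indicator (sqc q) x)"
  by (rule integrable_real_mult_indicator[OF _ dens_integrable]) (simp add: sq_sets_borel)

lemma gqd_int:
  assumes i: "i < n" and q: "q \<in> Q"
  shows "integrable lborel (\<lambda>x. g i x * indicator (sqc q) x * dist x (p i))"
proof (rule Bochner_Integration.integrable_bound[OF integrable_mult_right[OF gq_int[OF i], of "Mx i q" q]])
  note [measurable] = g_meas[OF i]
  show "(\<lambda>x. g i x * indicator (sqc q) x * dist x (p i)) \<in> borel_measurable lborel" by measurable
  show "AE x in lborel. norm (g i x * indicator (sqc q) x * dist x (p i)) \<le> norm (Mx i q * (g i x * indicator (sqc q) x))"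
  proof (intro AE_I2)
    fix x
    show "norm (g i x * indicator (sqc q) x * dist x (p i)) \<le> norm (Mx i q * (g i x * indicator (sqc q) x))"
    proof (cases "x \<in> sqc q")
      case True
      have "dist x (p i) \<le> Mx i q" using Mx_ge[OF True, of i] by (simp add: dist_commute)
      then show ?thesis using True g_nonneg[OF i, of x] Mx_nonneg[OF q, of i]
        by (simp add: abs_mult mult_left_mono mult.commute)
    qed simp
  qed
qed

lemma Dqd_int:
  assumes q: "q \<in> Q"
  shows "integrable lborel (\<lambda>x. D x * indicator (sqc q) x * dist x (p i))"
proof (rule Bochner_Integration.integrable_bound[OF integrable_mult_right[OF Dq_int, of "Mx i q" q]])
  show "(\<lambda>x. D x * indicator (sqc q) x * dist x (p i)) \<in> borel_measurable lborel" by measurable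
  show "AE x in lborel. norm (D x * indicator (sqc q) x * dist x (p i)) \<le> norm (Mx i q * (D x * indicator (sqc q) x))"
  proof (intro AE_I2)
    fix x
    show "norm (D x * indicator (sqc q) x * dist x (p i)) \<le> norm (Mx i q * (D x * indicator (sqc q) x))"
    proof (cases "x \<in> sqc q")
      case True
      have "dist x (p i) \<le> Mx i q" using Mx_ge[OF True, of i] by (simp add: dist_commute)
      then have "dist x (p i) * D x \<le> Mx i q * D x" by (rule mult_right_mono[OF _ dens_nonneg])
      then show ?thesis using True dens_nonneg[of m a b c x] Mx_nonneg[OF q, of i]
        by (simp add: abs_mult mult.commute)
    qed simp
  qed
qed

lemma Dqd_le:
  assumes q: "q \<in> Q"
  shows "integral\<^sup>L lborel (\<lambda>x. D x * indicator (sqc q) x * dist x (p i)) \<le> Mx i q * cell_mass m a b c q"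
proof -
  have "integral\<^sup>L lborel (\<lambda>x. D x * indicator (sqc q) x * dist x (p i))
      \<le> integral\<^sup>L lborel (\<lambda>x. Mx i q * (D x * indicator (sqc q) x))"
  proof (rule integral_mono[OF Dqd_int[OF q] integrable_mult_right[OF Dq_int]])
    fix x
    show "D x * indicator (sqc q) x * dist x (p i) \<le> Mx i q * (D x * indicator (sqc q) x)"
    proof (cases "x \<in> sqc q")
      case True
      have "dist x (p i) \<le> Mx i q" using Mx_ge[OF True, of i] by (simp add: dist_commute)
      then have "dist x (p i) * D x \<le> Mx i q * D x" by (rule mult_right_mono[OF _ dens_nonneg])
      then show ?thesis using True by (simp add: mult.commute)
    qed simp
  qed
  also have "\<dots> = Mx i q * cell_mass m a b c q" by (simp add: cm_int)
  finally show ?thesis .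
qed

end

context setting begin

lemma nu_nonneg: "i < n \<Longrightarrow> q \<in> Q \<Longrightarrow> 0 \<le> \<nu> i q"
  using nu_plan unfolding is_disc_plan_def by blast
lemma nu_col: "q \<in> Q \<Longrightarrow> (\<Sum>i<n. \<nu> i q) = cell_mass m a b c q"
  using nu_plan unfolding is_disc_plan_def by blast

lemma spread_i:
  assumes i: "i < n"
  shows "integral\<^sup>L lborel (\<lambda>x. spread_plan m a b c Q \<nu> i x * dist x (p i)) \<le> (\<Sum>q\<in>Q. \<nu> i q * Mx i q)"
proof -
  have eq: "(\<lambda>x. spread_plan m a b c Q \<nu> i x * dist x (p i))
      = (\<lambda>x. \<Sum>q\<in>Q. \<nu> i q / cell_mass m a b c q * (D x * indicator (sqc q) x * dist x (p i)))"
    unfolding spread_plan_def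
    by (rule ext, simp only: sum_distrib_right, rule sum.cong, simp_all only: mult_ac)
  have "integral\<^sup>L lborel (\<lambda>x. \<Sum>q\<in>Q. \<nu> i q / cell_mass m a b c q * (D x * indicator (sqc q) x * dist x (p i)))
      = (\<Sum>q\<in>Q. integral\<^sup>L lborel (\<lambda>x. \<nu> i q / cell_mass m a b c q * (D x * indicator (sqc q) x * dist x (p i))))"
    by (rule Bochner_Integration.integral_sum) (intro integrable_mult_right Dqd_int; simp)
  also have "\<dots> = (\<Sum>q\<in>Q. \<nu> i q / cell_mass m a b c q * integral\<^sup>L lborel (\<lambda>x. D x * indicator (sqc q) x * dist x (p i)))"
    by (simp add: Dqd_int)
  also have "\<dots> \<le> (\<Sum>q\<in>Q. \<nu> i q * Mx i q)"
  proof (rule sum_mono)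
    fix q assume q: "q \<in> Q"
    define X where "X = integral\<^sup>L lborel (\<lambda>x. D x * indicator (sqc q) x * dist x (p i))"
    have X: "X \<le> Mx i q * cell_mass m a b c q" unfolding X_def by (rule Dqd_le[OF q])
    have n0: "0 \<le> \<nu> i q" "0 \<le> Mx i q" using nu_nonneg[OF i q] Mx_nonneg[OF q] by auto
    show "\<nu> i q / cell_mass m a b c q * X \<le> \<nu> i q * Mx i q"
    proof (cases "cell_mass m a b c q = 0")
      case True then show ?thesis using n0 by simp
    next
      case False
      then have cp: "cell_mass m a b c q > 0" using cm_nonneg[of q] by simp
      have "\<nu> i q / cell_mass m a b c q * X \<le> \<nu> i q / cell_mass m a b c q * (Mx i q * cell_mass m a b c q)"
        using X n0 cp by (intro mult_left_mono) auto
      also have "\<dots> = \<nu> i q * Mx i q" using cp by simp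
      finally show ?thesis .
    qed
  qed
  finally show ?thesis unfolding eq .
qed

lemma E1: "plan_cost n p (spread_plan m a b c Q \<nu>) \<le> (\<Sum>i<n. \<Sum>q\<in>Q. \<nu> i q * Mx i q)"
  unfolding plan_cost_def by (rule sum_mono) (rule spread_i; simp)

definition "EM = (\<Sum>q\<in>Q. e q * cell_mass m a b c q)"

lemma E2: "(\<Sum>i<n. \<Sum>q\<in>Q. \<nu> i q * Mx i q) \<le> (1 + \<delta>) * disc_cost n p Q t \<nu> + EM"
proof -
  have "(\<Sum>i<n. \<Sum>q\<in>Q. \<nu> i q * Mx i q) \<le> (\<Sum>i<n. \<Sum>q\<in>Q. (1 + \<delta>) * (\<nu> i q * dist (p i) (t q)) + \<nu> i q * e q)"
  proof (intro sum_mono)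
    fix i q assume i: "i \<in> {..<n}" and q: "q \<in> Q"
    have "\<nu> i q * Mx i q \<le> \<nu> i q * ((1 + \<delta>) * dist (p i) (t q) + e q)"
      using K2[OF q, of i] i nu_nonneg[of i q] q by (intro mult_left_mono) auto
    then show "\<nu> i q * Mx i q \<le> (1 + \<delta>) * (\<nu> i q * dist (p i) (t q)) + \<nu> i q * e q"
      by (simp add: algebra_simps)
  qed
  also have "\<dots> = (1 + \<delta>) * disc_cost n p Q t \<nu> + (\<Sum>q\<in>Q. e q * (\<Sum>i<n. \<nu> i q))"
    unfolding disc_cost_def
    by (simp add: sum.distrib sum_distrib_left sum_distrib_right mult_ac sum.swap[of _ Q])
  also have "(\<Sum>q\<in>Q. e q * (\<Sum>i<n. \<nu> i q)) = EM"
    unfolding EM_def by (rule sum.cong) (simp_all add: nu_col)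
  finally show ?thesis .
qed

definition "nu' i q = integral\<^sup>L lborel (\<lambda>x. g i x * indicator (sqc q) x)"

lemma nu'_plan: "is_disc_plan n w Q (cell_mass m a b c) nu'"
  unfolding is_disc_plan_def
proof (intro conjI allI impI ballI)
  fix i q assume i: "i < n" and q: "q \<in> Q"
  show "0 \<le> nu' i q" unfolding nu'_def using g_nonneg[OF i]
    by (intro integral_nonneg_AE AE_I2) simp
next
  fix i assume i: "i < n"
  note [measurable] = g_meas[OF i]
  have "(\<Sum>q\<in>Q. nu' i q) = integral\<^sup>L lborel (\<lambda>x. \<Sum>q\<in>Q. g i x * indicator (sqc q) x)"
    unfolding nu'_def by (rule Bochner_Integration.integral_sum[symmetric]) (rule gq_int[OF i])
  also have "\<dots> = integral\<^sup>L lborel (g i)"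
  proof (rule integral_cong_AE)
    show "(\<lambda>x. \<Sum>q\<in>Q. g i x * indicator (sqc q) x) \<in> borel_measurable lborel" by measurable
    show "g i \<in> borel_measurable lborel" by measurable
    show "AE x in lborel. (\<Sum>q\<in>Q. g i x * indicator (sqc q) x) = g i x"
      using g_cover_AE[OF i] by (simp add: sum_distrib_left)
  qed
  finally show "(\<Sum>q\<in>Q. nu' i q) = w i" using g_total[OF i] by simp
next
  fix q assume q: "q \<in> Q"
  have "(\<Sum>i<n. nu' i q) = integral\<^sup>L lborel (\<lambda>x. \<Sum>i<n. g i x * indicator (sqc q) x)"
    unfolding nu'_def by (rule Bochner_Integration.integral_sum[symmetric]) (rule gq_int; simp)
  also have "\<dots> = integral\<^sup>L lborel (\<lambda>x. D x * indicator (sqc q) x)"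
  proof (rule integral_cong_AE)
    show "(\<lambda>x. \<Sum>i<n. g i x * indicator (sqc q) x) \<in> borel_measurable lborel"
      by (rule borel_measurable_sum) (rule borel_measurable_integrable[OF gq_int]; simp)
    show "(\<lambda>x. D x * indicator (sqc q) x) \<in> borel_measurable lborel" by measurable
    show "AE x in lborel. (\<Sum>i<n. g i x * indicator (sqc q) x) = D x * indicator (sqc q) x"
      using g_AE by (auto simp: sum_distrib_right[symmetric])
  qed
  finally show "(\<Sum>i<n. nu' i q) = cell_mass m a b c q" by (simp add: cm_int)
qed

end

context setting begin

lemma gd_AE:
  assumes i: "i < n"
  shows "AE x in lborel. (\<Sum>q\<in>Q. g i x * indicator (sqc q) x * dist x (p i)) = g i x * dist x (p i)"
  using g_cover_AE[OF i]
proof (rule AE_mp, intro AE_I2 impI)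
  fix x assume "g i x * (\<Sum>q\<in>Q. indicator (sqc q) x) = g i x"
  then have "g i x * (\<Sum>q\<in>Q. indicator (sqc q) x) * dist x (p i) = g i x * dist x (p i)" by simp
  then show "(\<Sum>q\<in>Q. g i x * indicator (sqc q) x * dist x (p i)) = g i x * dist x (p i)"
    by (simp add: sum_distrib_left sum_distrib_right)
qed

lemma gd_int: "i < n \<Longrightarrow> integrable lborel (\<lambda>x. g i x * dist x (p i))"
proof -
  assume i: "i < n"
  note [measurable] = g_meas[OF i]
  show ?thesis
  proof (rule integrable_cong_AE_imp[OF _ _ gd_AE[OF i]])
    show "integrable lborel (\<lambda>x. \<Sum>q\<in>Q. g i x * indicator (sqc q) x * dist x (p i))"
      by (rule Bochner_Integration.integrable_sum) (rule gqd_int[OF i])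
    show "(\<lambda>x. g i x * dist x (p i)) \<in> borel_measurable lborel" by measurable
  qed
qed

lemma gd_decomp: "i < n \<Longrightarrow> integral\<^sup>L lborel (\<lambda>x. g i x * dist x (p i))
    = (\<Sum>q\<in>Q. integral\<^sup>L lborel (\<lambda>x. g i x * indicator (sqc q) x * dist x (p i)))"
proof -
  assume i: "i < n"
  note [measurable] = g_meas[OF i]
  have "integral\<^sup>L lborel (\<lambda>x. g i x * dist x (p i))
      = integral\<^sup>L lborel (\<lambda>x. \<Sum>q\<in>Q. g i x * indicator (sqc q) x * dist x (p i))"
    by (rule integral_cong_AE) (measurable, use gd_AE[OF i] in \<open>simp add: eq_commute\<close>)
  also have "\<dots> = (\<Sum>q\<in>Q. integral\<^sup>L lborel (\<lambda>x. g i x * indicator (sqc q) x * dist x (p i)))"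
    by (rule Bochner_Integration.integral_sum) (rule gqd_int[OF i])
  finally show ?thesis .
qed

lemma nu'_nonneg: "i < n \<Longrightarrow> 0 \<le> nu' i q"
  unfolding nu'_def using g_nonneg by (intro integral_nonneg_AE AE_I2) simp

lemma E4: "disc_cost n p Q t nu' \<le> (1 + \<delta>) * plan_cost n p g + EM"
proof -
  have "disc_cost n p Q t nu' \<le> (\<Sum>i<n. \<Sum>q\<in>Q. (1 + \<delta>) * integral\<^sup>L lborel (\<lambda>x. g i x * indicator (sqc q) x * dist x (p i)) + nu' i q * e q)"
    unfolding disc_cost_def
  proof (intro sum_mono)
    fix i q assume i: "i \<in> {..<n}" and q: "q \<in> Q"
    have i': "i < n" using i by simp
    have a1: "nu' i q * dist (p i) (t q) \<le> nu' i q * ((1 + \<delta>) * mn i q + e q)"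
      using K1[OF q i'] nu'_nonneg[OF i'] by (intro mult_left_mono) auto
    have a2: "nu' i q * mn i q \<le> integral\<^sup>L lborel (\<lambda>x. g i x * indicator (sqc q) x * dist x (p i))"
    proof -
      have "nu' i q * mn i q = integral\<^sup>L lborel (\<lambda>x. g i x * indicator (sqc q) x * mn i q)"
        unfolding nu'_def by simp
      also have "\<dots> \<le> integral\<^sup>L lborel (\<lambda>x. g i x * indicator (sqc q) x * dist x (p i))"
      proof (rule integral_mono)
        show "integrable lborel (\<lambda>x. g i x * indicator (sqc q) x * mn i q)"
          using gq_int[OF i'] by simp
        show "integrable lborel (\<lambda>x. g i x * indicator (sqc q) x * dist x (p i))" by (rule gqd_int[OF i' q])
        fix x
        show "g i x * indicator (sqc q) x * mn i q \<le> g i x * indicator (sqc q) x * dist x (p i)"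
        proof (cases "x \<in> sqc q")
          case True
          have "mn i q \<le> dist x (p i)" using mn_le[OF True, of i] by (simp add: dist_commute)
          then show ?thesis using True g_nonneg[OF i', of x] by (simp add: mult_left_mono)
        qed simp
      qed
      finally show ?thesis .
    qed
    have a3: "0 \<le> 1 + \<delta>" using delta by simp
    show "nu' i q * dist (p i) (t q) \<le> (1 + \<delta>) * integral\<^sup>L lborel (\<lambda>x. g i x * indicator (sqc q) x * dist x (p i)) + nu' i q * e q"
      using a1 mult_left_mono[OF a2 a3] by (simp add: algebra_simps)
  qed
  also have "\<dots> = (1 + \<delta>) * (\<Sum>i<n. \<Sum>q\<in>Q. integral\<^sup>L lborel (\<lambda>x. g i x * indicator (sqc q) x * dist x (p i)))
      + (\<Sum>q\<in>Q. e q * (\<Sum>i<n. nu' i q))"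
    by (simp add: sum.distrib sum_distrib_left sum_distrib_right mult_ac sum.swap[of _ Q])
  also have "(\<Sum>i<n. \<Sum>q\<in>Q. integral\<^sup>L lborel (\<lambda>x. g i x * indicator (sqc q) x * dist x (p i))) = plan_cost n p g"
    unfolding plan_cost_def by (rule sum.cong) (simp_all add: gd_decomp)
  also have "(\<Sum>q\<in>Q. e q * (\<Sum>i<n. nu' i q)) = EM"
    unfolding EM_def using nu'_plan unfolding is_disc_plan_def by (intro sum.cong) auto
  finally show ?thesis .
qed

lemma disc_opt: "disc_cost n p Q t \<nu> \<le> disc_cost n p Q t nu'"
  using nu_opt nu'_plan by blast

end

lemma final_arith:
  fixes d C EM s P X Y :: real
  assumes d0: "0 \<le> d" and dl: "d \<le> 1/4" and C: "3/4 * s \<le> C" and EM: "EM \<le> 2 * d * s"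
    and S1: "P \<le> (1 + d) * X + EM" and S2: "X \<le> Y" and S3: "Y \<le> (1 + d) * C + EM"
    and EM0: "0 \<le> EM" and s0: "0 \<le> s"
  shows "P \<le> (1 + 9 * d) * C"
proof -
  have C0: "0 \<le> C" using C s0 by linarith
  have a: "(1 + d) * X \<le> (1 + d) * Y" using S2 d0 by (intro mult_left_mono) auto
  have b: "(1 + d) * Y \<le> (1 + d) * ((1 + d) * C + EM)" using S3 d0 by (intro mult_left_mono) auto
  have c: "EM \<le> 2 * d * (4/3 * C)"
  proof -
    have "s \<le> 4/3 * C" using C by linarith
    then have "2 * d * s \<le> 2 * d * (4/3 * C)" using d0 by (intro mult_left_mono) auto
    then show ?thesis using EM by linarith
  qed
  have P1: "P \<le> (1 + d) * ((1 + d) * C + EM) + EM" using S1 a b by linarith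
  have e1: "(1 + d) * ((1 + d) * C + EM) + EM = C + 2 * (d * C) + (d * d) * C + (2 + d) * EM"
    by (simp add: algebra_simps)
  have c2: "(2 + d) * EM \<le> (2 + d) * (2 * d * (4/3 * C))" using c d0 by (intro mult_left_mono) auto
  have e2: "(2 + d) * (2 * d * (4/3 * C)) = 16/3 * (d * C) + 8/3 * ((d * d) * C)"
    by (simp add: algebra_simps)
  have h: "d * d \<le> d * (1/4)" using dl d0 by (rule mult_left_mono)
  have hC: "(d * d) * C \<le> (d * (1/4)) * C" using h C0 by (rule mult_right_mono)
  have e3: "(d * (1/4)) * C = (d * C) / 4" by simp
  have dC: "0 \<le> d * C" using d0 C0 by simp
  have e4: "(1 + 9 * d) * C = C + 9 * (d * C)" by (simp add: algebra_simps)
  show ?thesis unfolding e4 using P1 e1 c2 e2 hC e3 dC by linarith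
qed

context setting begin

definition "s = 1 / (4 * sqrt (real n * real m))"
definition "B = (\<Union>i<n. cbox (fst (p i) - s, snd (p i) - s) (fst (p i) + s, snd (p i) + s))"

lemma nm_pos: "real n * real m > 0"
  using n_pos m_pos by simp

lemma s_pos: "s > 0"
  using nm_pos by (simp add: s_def)

lemma r_le_s: "r \<le> s"
proof -
  have "\<delta> \<le> 1 / 4"
  proof -
    have "1 / (2 * pi) \<le> 1 / 4" using pi_gt3 by (intro divide_left_mono) auto
    then show ?thesis using delta by linarith
  qed
  then show ?thesis using nm_pos unfolding r_def s_def by (simp add: field_simps)
qed

lemma B_sets: "B \<in> sets borel"
  unfolding B_def by (intro sets.finite_UN) (auto intro: borel_closed)

lemma B_bounded: "bounded B"
  unfolding B_def by (intro bounded_UN) auto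

lemma B_fin: "emeasure lborel B < top"
  using emeasure_bounded_finite[OF B_bounded] by simp

lemma cbox_measure: "measure lborel (cbox (u - s, v - s) (u + s, v + s)) = 4 * s\<^sup>2"
  using s_pos by (simp add: measure_lborel_cbox_eq Basis_prod_def power2_eq_square)

lemma measure_B: "measure lborel B \<le> real n * (4 * s\<^sup>2)"
proof -
  have "measure lborel B \<le> (\<Sum>i<n. measure lborel (cbox (fst (p i) - s, snd (p i) - s) (fst (p i) + s, snd (p i) + s)))"
    unfolding B_def by (rule measure_UNION_le) auto
  also have "\<dots> = real n * (4 * s\<^sup>2)" by (simp add: cbox_measure)
  finally show ?thesis .
qed

lemma DB_int: "integrable lborel (\<lambda>x. D x * indicator B x)"
  by (rule integrable_real_mult_indicator[OF B_sets[folded sets_lborel] dens_integrable])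

lemma mass_B: "integral\<^sup>L lborel (\<lambda>x. D x * indicator B x) \<le> 1 / 4"
proof -
  have "integral\<^sup>L lborel (\<lambda>x. D x * indicator B x) \<le> integral\<^sup>L lborel (\<lambda>x. real m * indicator B x)"
  proof (rule integral_mono[OF DB_int])
    show "integrable lborel (\<lambda>x. real m * indicator B x)"
      using B_fin B_sets by (intro integrable_mult_right integrable_real_indicator) auto
    fix x show "D x * indicator B x \<le> real m * indicator B x"
      using dens_le[of m a b c x] by (simp add: indicator_def)
  qed
  also have "\<dots> = real m * measure lborel B" by simp
  also have "\<dots> \<le> real m * (real n * (4 * s\<^sup>2))" using measure_B by (intro mult_left_mono) auto
  also have "\<dots> = 1 / 4"
  proof -
    have "s\<^sup>2 = 1 / (16 * (real n * real m))"
      unfolding s_def using nm_pos by (simp add: power2_eq_square field_simps)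
    then show ?thesis using n_pos m_pos by (simp add: field_simps)
  qed
  finally show ?thesis .
qed

lemma near_in_B:
  assumes q: "q \<in> Q" and N: "Nq q" and x: "x \<in> sqc q"
  shows "x \<in> B"
proof -
  obtain k where k: "k < n" "near_cell (p k) r (sqc q)" using N unfolding Nq_def by blast
  have d: "dist (p k) x \<le> s" using k(2) x r_le_s unfolding near_cell_def by force
  have "dist (fst (p k)) (fst x) \<le> s" "dist (snd (p k)) (snd x) \<le> s"
    using dist_fst_le[of "p k" x] dist_snd_le[of "p k" x] d by linarith+
  then have "x \<in> cbox (fst (p k) - s, snd (p k) - s) (fst (p k) + s, snd (p k) + s)"
    by (cases x) (auto simp: dist_real_def abs_le_iff)
  then show ?thesis unfolding B_def using k(1) by blast
qed

lemma EM_bound: "EM \<le> 2 * r * (1 / 4)"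
proof -
  let ?QN = "{q \<in> Q. Nq q}"
  have e1: "EM = 2 * r * (\<Sum>q\<in>?QN. cell_mass m a b c q)"
  proof -
    have "EM = (\<Sum>q\<in>Q. if Nq q then 2 * r * cell_mass m a b c q else 0)"
      unfolding EM_def e_def by (intro sum.cong) auto
    also have "\<dots> = (\<Sum>q\<in>?QN. 2 * r * cell_mass m a b c q)"
      using Q_finite by (simp add: sum.inter_filter)
    also have "\<dots> = 2 * r * (\<Sum>q\<in>?QN. cell_mass m a b c q)"
      by (simp add: sum_distrib_left)
    finally show ?thesis .
  qed
  have e2: "(\<Sum>q\<in>?QN. cell_mass m a b c q) = integral\<^sup>L lborel (\<lambda>x. \<Sum>q\<in>?QN. D x * indicator (sqc q) x)"
    unfolding cm_int by (rule Bochner_Integration.integral_sum[symmetric]) (rule Dq_int)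
  have e3: "integral\<^sup>L lborel (\<lambda>x. \<Sum>q\<in>?QN. D x * indicator (sqc q) x) \<le> integral\<^sup>L lborel (\<lambda>x. D x * indicator B x)"
  proof (rule integral_mono[OF _ DB_int])
    show "integrable lborel (\<lambda>x. \<Sum>q\<in>?QN. D x * indicator (sqc q) x)"
      by (rule Bochner_Integration.integrable_sum) (rule Dq_int)
    fix x
    have "(\<Sum>q\<in>?QN. indicator (sqc q) x :: real) \<le> indicator B x"
    proof (cases "\<exists>q\<in>?QN. x \<in> sqc q")
      case True
      then have "x \<in> B" using near_in_B by blast
      then show ?thesis using ind_sum_le1(1)[of ?QN x] by auto
    next
      case False
      then have "(\<Sum>q\<in>?QN. indicator (sqc q) x :: real) = 0" by (intro sum.neutral) auto
      then show ?thesis by simp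
    qed
    then have "D x * (\<Sum>q\<in>?QN. indicator (sqc q) x) \<le> D x * indicator B x"
      by (rule mult_left_mono[OF _ dens_nonneg])
    then show "(\<Sum>q\<in>?QN. D x * indicator (sqc q) x) \<le> D x * indicator B x"
      by (simp add: sum_distrib_left)
  qed
  have X: "(\<Sum>q\<in>?QN. cell_mass m a b c q) \<le> 1 / 4" using e2 e3 mass_B by linarith
  have r0: "0 \<le> 2 * r" using r_pos by simp
  show ?thesis unfolding e1 by (rule mult_left_mono[OF X r0])
qed

lemma C_lower: "plan_cost n p g \<ge> 3 / 4 * s"
proof -
  have "plan_cost n p g \<ge> (\<Sum>i<n. integral\<^sup>L lborel (\<lambda>x. s * g i x - s * (g i x * indicator B x)))"
    unfolding plan_cost_def
  proof (rule sum_mono)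
    fix i assume i: "i \<in> {..<n}"
    then have i': "i < n" by simp
    show "integral\<^sup>L lborel (\<lambda>x. s * g i x - s * (g i x * indicator B x)) \<le> integral\<^sup>L lborel (\<lambda>x. g i x * dist x (p i))"
    proof (rule integral_mono)
      have gb: "integrable lborel (\<lambda>x. g i x * indicator B x)"
        using g_int[OF i'] B_sets by (intro integrable_real_mult_indicator) auto
      show "integrable lborel (\<lambda>x. s * g i x - s * (g i x * indicator B x))"
        using g_int[OF i'] gb by simp
      show "integrable lborel (\<lambda>x. g i x * dist x (p i))" by (rule gd_int[OF i'])
      fix x
      show "s * g i x - s * (g i x * indicator B x) \<le> g i x * dist x (p i)"
      proof (cases "x \<in> B")
        case True then show ?thesis using g_nonneg[OF i', of x] by simp
      next
        case False
        then have "x \<notin> cbox (fst (p i) - s, snd (p i) - s) (fst (p i) + s, snd (p i) + s)"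
          unfolding B_def using i' by blast
        then have "\<not> (dist (fst x) (fst (p i)) \<le> s \<and> dist (snd x) (snd (p i)) \<le> s)"
          by (cases x) (auto simp: dist_real_def abs_le_iff)
        then have "s \<le> dist x (p i)" using dist_fst_le[of x "p i"] dist_snd_le[of x "p i"] by linarith
        then have "g i x * s \<le> g i x * dist x (p i)" by (rule mult_left_mono[OF _ g_nonneg[OF i']])
        then show ?thesis using False by (simp add: mult.commute)
      qed
    qed
  qed
  also have "(\<Sum>i<n. integral\<^sup>L lborel (\<lambda>x. s * g i x - s * (g i x * indicator B x)))
      = s * (\<Sum>i<n. integral\<^sup>L lborel (g i)) - s * (\<Sum>i<n. integral\<^sup>L lborel (\<lambda>x. g i x * indicator B x))"
  proof -
    have "integral\<^sup>L lborel (\<lambda>x. s * g i x - s * (g i x * indicator B x))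
        = s * integral\<^sup>L lborel (g i) - s * integral\<^sup>L lborel (\<lambda>x. g i x * indicator B x)" if i: "i < n" for i
    proof -
      have gb: "integrable lborel (\<lambda>x. g i x * indicator B x)"
        using g_int[OF i] B_sets by (intro integrable_real_mult_indicator) auto
      show ?thesis using g_int[OF i] gb by simp
    qed
    then show ?thesis by (simp add: sum_subtractf sum_distrib_left)
  qed
  also have "(\<Sum>i<n. integral\<^sup>L lborel (g i)) = 1" using g_total w_sum by simp
  also have "(\<Sum>i<n. integral\<^sup>L lborel (\<lambda>x. g i x * indicator B x)) = integral\<^sup>L lborel (\<lambda>x. D x * indicator B x)"
  proof -
    have "(\<Sum>i<n. integral\<^sup>L lborel (\<lambda>x. g i x * indicator B x)) = integral\<^sup>L lborel (\<lambda>x. \<Sum>i<n. g i x * indicator B x)"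
      using B_sets by (intro Bochner_Integration.integral_sum[symmetric] integrable_real_mult_indicator g_int) auto
    also have "\<dots> = integral\<^sup>L lborel (\<lambda>x. D x * indicator B x)"
    proof (rule integral_cong_AE)
      show "(\<lambda>x. \<Sum>i<n. g i x * indicator B x) \<in> borel_measurable lborel"
        using B_sets by (intro borel_measurable_sum borel_measurable_integrable integrable_real_mult_indicator g_int) auto
      show "(\<lambda>x. D x * indicator B x) \<in> borel_measurable lborel"
        using DB_int by (rule borel_measurable_integrable)
      show "AE x in lborel. (\<Sum>i<n. g i x * indicator B x) = D x * indicator B x"
        using g_AE by (auto simp: sum_distrib_right[symmetric])
    qed
    finally show ?thesis .
  qed
  finally have "plan_cost n p g \<ge> s * 1 - s * integral\<^sup>L lborel (\<lambda>x. D x * indicator B x)" .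
  moreover have "s * integral\<^sup>L lborel (\<lambda>x. D x * indicator B x) \<le> s * (1/4)"
    using mass_B s_pos by (intro mult_left_mono) auto
  ultimately show ?thesis by linarith
qed

lemma delta_le: "\<delta> \<le> 1 / 4"
proof -
  have "1 / (2 * pi) \<le> 1 / 4" using pi_gt3 by (intro divide_left_mono) auto
  then show ?thesis using delta by linarith
qed

lemma rs: "r = 4 * \<delta> * s"
  unfolding r_def s_def by simp

lemma EMb: "EM \<le> 2 * \<delta> * s"
proof -
  have "2 * r * (1 / 4) = 2 * \<delta> * s" unfolding rs by simp
  then show ?thesis using EM_bound by linarith
qed

theorem main: "plan_cost n p (spread_plan m a b c Q \<nu>) \<le> (1 + 9 * \<delta>) * plan_cost n p g"
proof -
  have d0: "0 \<le> \<delta>" using delta by simp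
  have EM0: "0 \<le> EM" unfolding EM_def using e_nonneg cm_nonneg by (intro sum_nonneg mult_nonneg_nonneg)
  have s0: "0 \<le> s" using s_pos by simp
  show ?thesis
    by (rule final_arith[OF d0 delta_le C_lower EMb order_trans[OF E1 E2] disc_opt E4 EM0 s0])
qed

end

theorem theorem4:
  fixes n m :: nat and p :: "nat \<Rightarrow> pt" and w :: "nat \<Rightarrow> real"
    and a b c :: "nat \<Rightarrow> pt" and \<delta> :: real and org :: pt
    and t :: "pt \<times> real \<Rightarrow> pt" and \<nu> :: "nat \<Rightarrow> pt \<times> real \<Rightarrow> real"
  assumes w_pos: "\<forall>i<n. 0 < w i"
    and w_sum: "(\<Sum>i<n. w i) = 1"
    and area: "(\<Sum>j<m. measure lborel (tri (a j) (b j) (c j))) = 1"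
    and delta: "0 < \<delta>" "\<delta> \<le> 1 / (2 * pi)"
    and t_in: "\<forall>q\<in>leaf_cells n m p \<delta> (tri_union m a b c) (longest_edge m a b c) org.
                 t q \<in> csq (fst q) (snd q)"
    and nu_plan: "is_disc_plan n w (leaf_cells n m p \<delta> (tri_union m a b c) (longest_edge m a b c) org)
                    (cell_mass m a b c) \<nu>"
    and nu_opt: "\<forall>\<nu>'. is_disc_plan n w (leaf_cells n m p \<delta> (tri_union m a b c) (longest_edge m a b c) org)
                    (cell_mass m a b c) \<nu>' \<longrightarrow>
                  disc_cost n p (leaf_cells n m p \<delta> (tri_union m a b c) (longest_edge m a b c) org) t \<nu>
                  \<le> disc_cost n p (leaf_cells n m p \<delta> (tri_union m a b c) (longest_edge m a b c) org) t \<nu>'"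
  shows "\<forall>g. is_plan n w (tri_dens m a b c) g \<longrightarrow>
           plan_cost n p (spread_plan m a b c
              (leaf_cells n m p \<delta> (tri_union m a b c) (longest_edge m a b c) org) \<nu>)
           \<le> (1 + 9 * \<delta>) * plan_cost n p g"
  proof (intro allI impI)
  fix g assume g: "is_plan n w (tri_dens m a b c) g"
  interpret setting n m p w a b c \<delta> org t \<nu> g
    by unfold_locales (fact w_pos w_sum area delta t_in nu_plan nu_opt g)+
  show "plan_cost n p (spread_plan m a b c
              (leaf_cells n m p \<delta> (tri_union m a b c) (longest_edge m a b c) org) \<nu>)
           \<le> (1 + 9 * \<delta>) * plan_cost n p g"
    by (rule main)
qed

end
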